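(* Let $S$ be a numerical semigroup with minimal generators $e<a_1<\dots<a_t$, and let $s\in S$. If $(x_0,x_1,\dots,x_t)$ is a $B^{\mathcal D}$-factorization of ${\rm adj}(s)$ of length at most ${\rm ord}(s;S)$, then $x_0=0$.
   Context: A numerical semigroup is a submonoid of $(\mathbb N,+)$ with finite complement. An $S$-factorization of $n$ is $(c_0,\dots,c_t)\in\mathbb N^{t+1}$ with $c_0e+\sum c_ia_i=n$, of length $\sum c_i$. ${\rm ord}(n;S)$ is the maximal such length. Let $d_i=a_i-e$, $B=\langle e,d_1,\dots,d_t\rangle$, $\mathcal D=(e,d_1,\dots,d_t)$. A $B^{\mathcal D}$-factorization of $b$ is $(x_0,\dots,x_t)\in\mathbb N^{t+1}$ with $x_0e+\sum x_id_i=b$, of length $\sum x_i$. The adjustment of $s$ is ${\rm adj}(s)=s-{\rm ord}(s;S)e$. *)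

theory Defs
  imports Main
begin

definition numerical_semigroup :: "nat set \<Rightarrow> bool" where
  "numerical_semigroup S \<longleftrightarrow> 0 \<in> S \<and> (\<forall>x\<in>S. \<forall>y\<in>S. x + y \<in> S) \<and> finite (UNIV - S)"

inductive_set monoid_gen :: "nat set \<Rightarrow> nat set" for G where
  zero: "0 \<in> monoid_gen G"
| gen: "g \<in> G \<Longrightarrow> x \<in> monoid_gen G \<Longrightarrow> g + x \<in> monoid_gen G"

definition minimal_generating_set :: "nat set \<Rightarrow> nat set \<Rightarrow> bool" where
  "minimal_generating_set S G \<longleftrightarrow> monoid_gen G = S \<and> (\<forall>H. H \<subset> G \<longrightarrow> monoid_gen H \<noteq> S)"

definition S_fact_lengths :: "nat \<Rightarrow> (nat \<Rightarrow> nat) \<Rightarrow> nat \<Rightarrow> nat \<Rightarrow> nat set" where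
  "S_fact_lengths e a t n =
     {\<Sum>i\<in>{0..t}. c i | c. c 0 * e + (\<Sum>i\<in>{1..t}. c i * a i) = n}"

definition ord_S :: "nat \<Rightarrow> (nat \<Rightarrow> nat) \<Rightarrow> nat \<Rightarrow> nat \<Rightarrow> nat" where
  "ord_S e a t n = Max (S_fact_lengths e a t n)"

definition adj :: "nat \<Rightarrow> (nat \<Rightarrow> nat) \<Rightarrow> nat \<Rightarrow> nat \<Rightarrow> nat" where
  "adj e a t s = s - ord_S e a t s * e"

text \<open>x is a B^D-factorization of b, D = (e, a 1 - e, ..., a t - e).\<close>
definition BD_factorization :: "nat \<Rightarrow> (nat \<Rightarrow> nat) \<Rightarrow> nat \<Rightarrow> nat \<Rightarrow> (nat \<Rightarrow> nat) \<Rightarrow> bool" where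
  "BD_factorization e a t b x \<longleftrightarrow> x 0 * e + (\<Sum>i\<in>{1..t}. x i * (a i - e)) = b"

definition fact_length :: "nat \<Rightarrow> (nat \<Rightarrow> nat) \<Rightarrow> nat" where
  "fact_length t x = (\<Sum>i\<in>{0..t}. x i)"

end

theory Submission
  imports Defs
begin

lemma mg_remove0: "monoid_gen G \<subseteq> monoid_gen (G - {0})"
proof
  fix y assume "y \<in> monoid_gen G"
  then show "y \<in> monoid_gen (G - {0})"
  proof induction
    case zero then show ?case by (rule monoid_gen.zero)
  next
    case (gen g x) then show ?case by (cases "g = 0") (auto intro: monoid_gen.gen)
  qed
qed

lemma mg_mono: "H \<subseteq> G \<Longrightarrow> monoid_gen H \<subseteq> monoid_gen G"
proof
  fix y assume hg: "H \<subseteq> G" and "y \<in> monoid_gen H"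
  from this(2) show "y \<in> monoid_gen G"
  proof induction
    case zero then show ?case by (rule monoid_gen.zero)
  next
    case (gen g x) then show ?case using hg by (auto intro: monoid_gen.gen)
  qed
qed

theorem lemma3p2:
  fixes S :: "nat set" and e t s :: nat and a x :: "nat \<Rightarrow> nat"
  assumes "numerical_semigroup S"
    and "minimal_generating_set S (insert e (a ` {1..t}))"
    and "\<forall>i\<in>{1..t}. e < a i"
    and "\<forall>i\<in>{1..t}. \<forall>j\<in>{1..t}. i < j \<longrightarrow> a i < a j"
    and "s \<in> S"
    and "BD_factorization e a t (adj e a t s) x"
    and "fact_length t x \<le> ord_S e a t s"
  shows "x 0 = 0"
proof (rule ccontr)
  assume x0: "x 0 \<noteq> 0"
  define G where "G = insert e (a ` {1..t})"
  have epos: "e > 0"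
  proof (rule ccontr)
    assume "\<not> e > 0"
    hence "e = 0" by simp
    hence "G - {0} \<subset> G" unfolding G_def by auto
    moreover have "monoid_gen (G - {0}) = monoid_gen G"
      using mg_remove0 mg_mono[of "G - {0}" G] by blast
    ultimately show False using assms(2) unfolding minimal_generating_set_def G_def by blast
  qed
  define oo where "oo = ord_S e a t s"
  define X where "X = (\<Sum>i\<in>{1..t}. x i)"
  have fl: "fact_length t x = x 0 + X"
    unfolding fact_length_def X_def by (simp add: sum.atLeast_Suc_atMost)
  have Xo: "X \<le> oo" using assms(7) fl oo_def by simp
  have bd: "x 0 * e + (\<Sum>i\<in>{1..t}. x i * (a i - e)) = s - oo * e"
    using assms(6) unfolding BD_factorization_def adj_def oo_def by simp
  have "x 0 * e > 0" using x0 epos by simp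
  hence so: "s = oo * e + x 0 * e + (\<Sum>i\<in>{1..t}. x i * (a i - e))" using bd by linarith
  have split: "(\<Sum>i\<in>{1..t}. x i * a i) = (\<Sum>i\<in>{1..t}. x i * (a i - e)) + X * e"
    unfolding X_def sum_distrib_right sum.distrib[symmetric]
    proof (rule sum.cong)
      fix i assume "i \<in> {1..t}"
      hence "e \<le> a i" using assms(3) by (meson less_imp_le)
      hence "x i * a i = x i * (a i - e) + x i * e" by (metis add_mult_distrib2 le_add_diff_inverse2)
      thus "x i * a i = x i * (a i - e) + x i * e" .
    qed simp
  define c where "c = (\<lambda>i. if i = 0 then oo - X + x 0 else x i)"
  have csum: "(\<Sum>i\<in>{0..t}. c i) = oo + x 0"
  proof -
    have "(\<Sum>i\<in>{0..t}. c i) = c 0 + (\<Sum>i\<in>{1..t}. c i)" by (simp add: sum.atLeast_Suc_atMost)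
    also have "(\<Sum>i\<in>{1..t}. c i) = X" unfolding X_def c_def by (rule sum.cong) auto
    finally show ?thesis using Xo c_def by simp
  qed
  have cval: "c 0 * e + (\<Sum>i\<in>{1..t}. c i * a i) = s"
  proof -
    have "(\<Sum>i\<in>{1..t}. c i * a i) = (\<Sum>i\<in>{1..t}. x i * a i)" unfolding c_def by (rule sum.cong) auto
    moreover have "c 0 * e + X * e = oo * e + x 0 * e"
    proof -
      have "c 0 + X = oo + x 0" using Xo unfolding c_def by simp
      hence "(c 0 + X) * e = (oo + x 0) * e" by simp
      thus ?thesis by (simp add: add_mult_distrib)
    qed
    ultimately show ?thesis using split so by simp
  qed
  have mem: "oo + x 0 \<in> S_fact_lengths e a t s"
    unfolding S_fact_lengths_def using csum cval by force
  have fin: "finite (S_fact_lengths e a t s)"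
  proof (rule finite_subset[of _ "{..s}"])
    show "S_fact_lengths e a t s \<subseteq> {..s}"
    proof
      fix l assume "l \<in> S_fact_lengths e a t s"
      then obtain d where l: "l = (\<Sum>i\<in>{0..t}. d i)" and dv: "d 0 * e + (\<Sum>i\<in>{1..t}. d i * a i) = s"
        unfolding S_fact_lengths_def by auto
      have "l = d 0 + (\<Sum>i\<in>{1..t}. d i)" using l by (simp add: sum.atLeast_Suc_atMost)
      also have "d 0 \<le> d 0 * e" using epos by simp
      also have "(\<Sum>i\<in>{1..t}. d i) \<le> (\<Sum>i\<in>{1..t}. d i * a i)"
      proof (rule sum_mono)
        fix i assume "i \<in> {1..t}"
        hence "e < a i" using assms(3) by blast
        hence "1 \<le> a i" by simp
        thus "d i \<le> d i * a i" by simp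
      qed
      finally show "l \<in> {..s}" using dv by simp
    qed
  qed simp
  have "oo + x 0 \<le> oo" using Max_ge[OF fin mem] unfolding oo_def ord_S_def by simp
  with x0 show False by simp
qed

end
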